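(* On the uniform one-dimensional grid of spacing $h$, consider the finite difference operator \[ -F^{1D,e}[u]=A^+\left(\lvert u_x^h\rvert^+,-u_{xx}^h\right)+A^-\left(-\lvert u_x^h\rvert^-,-u_{xx}^h\right). \] Then $-F^{1D,e}$ is elliptic and consistent with $-F^{1D}$, where $F^{1D}[u]=A(u_x,u_{xx})=(u_x^2u_{xx})^{1/3}$.
   Context: $A(p,q)=(p^2q)^{1/3}$ (real cube root), $x^+=\max(x,0)$, $x^-=\min(x,0)$, $A^+(p,q)=A(p^+,q^+)$, $A^-(p,q)=A(p^-,q^-)$. For a grid function $u$: $D^-_xu(x)=\frac{u(x)-u(x-h)}h$, $-D^+_xu(x)=\frac{u(x)-u(x+h)}h$, $\lvert u_x^h\rvert^+=\max\{-D^+_xu,D^-_xu,0\}$, $-\lvert u_x^h\rvert^-=\min\{-D^+_xu,D^-_xu,0\}$, and $u_{xx}^h(x)=\frac{u(x+h)-2u(x)+u(x-h)}{h^2}$. A finite difference operator has the form $F^h[u](x)=F^h(x,u(x),u(x)-u(\cdot))$ (depending on $u(x)$ and the differences $u(x)-u(y)$ for grid points $y$); it is elliptic if $r\le s$ and $v(\cdot)\le w(\cdot)$ imply $F^h(x,r,v(\cdot))\le F^h(x,s,w(\cdot))$. It is consistent with an operator $F$ if for every smooth $\phi$ and every $x$, $\lim_{h\to0,\,y\to x}F^h[\phi](y)=F[\phi](x)$. *)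

theory Defs
  imports "HOL-Analysis.Analysis"
begin

text \<open>Real cube root: Isabelle's root 3 is the odd real root, defined for negative arguments.\<close>
definition A :: "real \<Rightarrow> real \<Rightarrow> real" where
  "A p q = root 3 (p\<^sup>2 * q)"

definition pos_part :: "real \<Rightarrow> real" where "pos_part x = max x 0"
definition neg_part :: "real \<Rightarrow> real" where "neg_part x = min x 0"

definition Aplus :: "real \<Rightarrow> real \<Rightarrow> real" where
  "Aplus p q = A (pos_part p) (pos_part q)"
definition Aminus :: "real \<Rightarrow> real \<Rightarrow> real" where
  "Aminus p q = A (neg_part p) (neg_part q)"

definition Dminus :: "real \<Rightarrow> (real \<Rightarrow> real) \<Rightarrow> real \<Rightarrow> real" where
  "Dminus h u x = (u x - u (x - h)) / h"
definition mDplus :: "real \<Rightarrow> (real \<Rightarrow> real) \<Rightarrow> real \<Rightarrow> real" where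
  "mDplus h u x = (u x - u (x + h)) / h"
definition absux_plus :: "real \<Rightarrow> (real \<Rightarrow> real) \<Rightarrow> real \<Rightarrow> real" where
  "absux_plus h u x = max (max (mDplus h u x) (Dminus h u x)) 0"
definition mabsux_minus :: "real \<Rightarrow> (real \<Rightarrow> real) \<Rightarrow> real \<Rightarrow> real" where
  "mabsux_minus h u x = min (min (mDplus h u x) (Dminus h u x)) 0"
definition uxx :: "real \<Rightarrow> (real \<Rightarrow> real) \<Rightarrow> real \<Rightarrow> real" where
  "uxx h u x = (u (x + h) - 2 * u x + u (x - h)) / h\<^sup>2"

definition mF1De :: "real \<Rightarrow> (real \<Rightarrow> real) \<Rightarrow> real \<Rightarrow> real" where
  "mF1De h u x = Aplus (absux_plus h u x) (- uxx h u x)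
               + Aminus (mabsux_minus h u x) (- uxx h u x)"

definition F1D :: "(real \<Rightarrow> real) \<Rightarrow> real \<Rightarrow> real" where
  "F1D u x = A (deriv u x) (deriv (deriv u) x)"

definition elliptic_scheme ::
  "(real \<Rightarrow> (real \<Rightarrow> real) \<Rightarrow> real \<Rightarrow> real) \<Rightarrow> bool" where
  "elliptic_scheme Fh \<longleftrightarrow>
    (\<exists>G :: real \<Rightarrow> real \<Rightarrow> real \<Rightarrow> (real \<Rightarrow> real) \<Rightarrow> real.
       (\<forall>h u x. h > 0 \<longrightarrow> Fh h u x = G h x (u x) (\<lambda>y. u x - u y)) \<and>
       (\<forall>h x r s v w. h > 0 \<longrightarrow> r \<le> s \<longrightarrow>
            (\<forall>k::int. v (x + of_int k * h) \<le> w (x + of_int k * h)) \<longrightarrow>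
            G h x r v \<le> G h x s w))"

definition smooth :: "(real \<Rightarrow> real) \<Rightarrow> bool" where
  "smooth \<phi> \<longleftrightarrow> (\<forall>n x. ((deriv ^^ n) \<phi>) differentiable (at x))"

definition consistent_with ::
  "(real \<Rightarrow> (real \<Rightarrow> real) \<Rightarrow> real \<Rightarrow> real) \<Rightarrow> ((real \<Rightarrow> real) \<Rightarrow> real \<Rightarrow> real) \<Rightarrow> bool" where
  "consistent_with Fh F \<longleftrightarrow>
    (\<forall>\<phi> x. smooth \<phi> \<longrightarrow>
       ((\<lambda>(h, y). Fh h \<phi> y) \<longlongrightarrow> F \<phi> x) (at_right 0 \<times>\<^sub>F nhds x))"

end

theory Submission
  imports Defs
begin

lemma Aplus_mono: "p \<le> p' \<Longrightarrow> q \<le> q' \<Longrightarrow> Aplus p q \<le> Aplus p' q'"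
proof -
  assume a: "p \<le> p'" "q \<le> q'"
  have "(max p 0)\<^sup>2 \<le> (max p' 0)\<^sup>2" using a by (intro power_mono) auto
  hence "(max p 0)\<^sup>2 * max q 0 \<le> (max p' 0)\<^sup>2 * max q' 0"
    using a by (intro mult_mono) auto
  thus ?thesis by (simp add: Aplus_def A_def pos_part_def)
qed

lemma Aminus_mono: "p \<le> p' \<Longrightarrow> q \<le> q' \<Longrightarrow> Aminus p q \<le> Aminus p' q'"
proof -
  assume a: "p \<le> p'" "q \<le> q'"
  have "(min p' 0)\<^sup>2 \<le> (min p 0)\<^sup>2" using a
  proof -
    have "(- min p' 0)\<^sup>2 \<le> (- min p 0)\<^sup>2" using a by (intro power_mono) auto
    thus ?thesis by simp
  qed
  hence 1: "(min p 0)\<^sup>2 * min q 0 \<le> (min p' 0)\<^sup>2 * min q 0"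
    by (intro mult_right_mono_neg) auto
  have 2: "(min p' 0)\<^sup>2 * min q 0 \<le> (min p' 0)\<^sup>2 * min q' 0"
    using a by (intro mult_left_mono) auto
  from 1 2 show ?thesis by (simp add: Aminus_def A_def neg_part_def)
qed

lemma elliptic: "elliptic_scheme mF1De"
  unfolding elliptic_scheme_def
proof (intro exI conjI allI impI)
  define G where "G = (\<lambda>h x (r::real) (v::real\<Rightarrow>real).
     Aplus (max (max (v (x+h)/h) (v (x-h)/h)) 0) ((v (x+h) + v (x-h))/h\<^sup>2)
   + Aminus (min (min (v (x+h)/h) (v (x-h)/h)) 0) ((v (x+h) + v (x-h))/h\<^sup>2))"
  fix h :: real and u x assume h: "h > 0"
  have e: "- uxx h u x = ((u x - u (x+h)) + (u x - u (x-h)))/h\<^sup>2"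
    unfolding uxx_def minus_divide_left by (rule arg_cong[where f="\<lambda>t. t / h\<^sup>2"]) simp
  show "mF1De h u x = G h x (u x) (\<lambda>y. u x - u y)"
    unfolding mF1De_def G_def absux_plus_def mabsux_minus_def mDplus_def Dminus_def e ..
next
  fix h x r s :: real and v w :: "real \<Rightarrow> real"
  assume h: "h > 0" and "r \<le> s" and k: "\<forall>k::int. v (x + of_int k * h) \<le> w (x + of_int k * h)"
  have 1: "v (x+h) \<le> w (x+h)" using k[rule_format, of 1] by simp
  have 2: "v (x-h) \<le> w (x-h)" using k[rule_format, of "-1"] by simp
  have a: "v (x+h)/h \<le> w (x+h)/h" using 1 h by (simp add: divide_right_mono)
  have b: "v (x-h)/h \<le> w (x-h)/h" using 2 h by (simp add: divide_right_mono)
  have c: "(v (x+h) + v (x-h))/h\<^sup>2 \<le> (w (x+h) + w (x-h))/h\<^sup>2"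
    using 1 2 by (intro divide_right_mono) auto
  show "Aplus (max (max (v (x+h)/h) (v (x-h)/h)) 0) ((v (x+h) + v (x-h))/h\<^sup>2)
   + Aminus (min (min (v (x+h)/h) (v (x-h)/h)) 0) ((v (x+h) + v (x-h))/h\<^sup>2)
   \<le> Aplus (max (max (w (x+h)/h) (w (x-h)/h)) 0) ((w (x+h) + w (x-h))/h\<^sup>2)
   + Aminus (min (min (w (x+h)/h) (w (x-h)/h)) 0) ((w (x+h) + w (x-h))/h\<^sup>2)"
    using a b c by (intro add_mono Aplus_mono Aminus_mono max.mono min.mono) auto
qed

lemma lim_lemma:
  fixes F :: "real \<Rightarrow> real \<Rightarrow> real" and g :: "real \<Rightarrow> real"
  assumes c: "isCont g x" and ex: "\<And>h y. h > 0 \<Longrightarrow> \<exists>z. \<bar>z - y\<bar> \<le> h \<and> F h y = g z"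
  shows "((\<lambda>p. F (fst p) (snd p)) \<longlongrightarrow> g x) (at_right 0 \<times>\<^sub>F nhds x)"
proof (rule tendstoI)
  fix e :: real assume e: "e > 0"
  from c e obtain d where d: "d > 0" and dd: "\<And>x'. dist x' x < d \<Longrightarrow> dist (g x') (g x) < e"
    unfolding continuous_at_eps_delta by blast
  have 1: "eventually (\<lambda>h. h \<in> {0<..<d/2}) (at_right (0::real))"
    using d by (intro eventually_at_right_real) simp
  have 2: "eventually (\<lambda>y. dist y x < d/2) (nhds x)"
    using d unfolding eventually_nhds_metric by (intro exI[of _ "d/2"]) auto
  show "eventually (\<lambda>p. dist (F (fst p) (snd p)) (g x) < e) (at_right 0 \<times>\<^sub>F nhds x)"
    unfolding eventually_prod_filter
  proof (intro exI conjI allI impI)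
    show "eventually (\<lambda>h. h \<in> {0<..<d/2}) (at_right (0::real))" by (fact 1)
    show "eventually (\<lambda>y. dist y x < d/2) (nhds x)" by (fact 2)
    fix h y assume h: "h \<in> {0<..<d/2}" and y: "dist y x < d/2"
    from h ex obtain z where z: "\<bar>z - y\<bar> \<le> h" "F h y = g z" by auto
    have "dist z x < d" using z(1) h y unfolding dist_real_def abs_diff_le_iff abs_diff_less_iff by auto
    thus "dist (F (fst (h, y)) (snd (h, y))) (g x) < e" using dd z by simp
  qed
qed

lemma dq:
  assumes D: "\<And>t. DERIV f t :> f' t" and h: "(h::real) > 0"
  shows "\<exists>z. y < z \<and> z < y + h \<and> f (y+h) - f y = h * f' z"
proof -
  have "\<exists>z. y < z \<and> z < y + h \<and> f (y+h) - f y = (y + h - y) * f' z"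
    using h D by (intro MVT2) auto
  thus ?thesis by simp
qed

lemma consistent: "consistent_with mF1De (\<lambda>u x. - F1D u x)"
  unfolding consistent_with_def
proof (intro allI impI)
  fix \<phi> :: "real \<Rightarrow> real" and x :: real
  assume sm: "smooth \<phi>"
  define f1 where "f1 = deriv \<phi>"
  define f2 where "f2 = deriv f1"
  have d0: "\<And>t. \<phi> differentiable (at t)" using sm unfolding smooth_def
    by (metis funpow_0)
  have d1: "\<And>t. f1 differentiable (at t)"
    using sm[unfolded smooth_def, rule_format, of 1] by (simp add: f1_def)
  have d2: "\<And>t. f2 differentiable (at t)"
    using sm[unfolded smooth_def, rule_format, of 2] by (simp add: f1_def f2_def numeral_2_eq_2)
  have D0: "\<And>t. DERIV \<phi> t :> f1 t" unfolding f1_def by (rule DERIV_deriv_iff_real_differentiable[THEN iffD2, OF d0])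
  have D1: "\<And>t. DERIV f1 t :> f2 t" unfolding f2_def by (rule DERIV_deriv_iff_real_differentiable[THEN iffD2, OF d1])
  have c1: "isCont f1 x" by (rule DERIV_isCont[OF D1])
  have c2: "isCont f2 x" by (rule differentiable_imp_continuous_within[OF d2])
  let ?F = "at_right 0 \<times>\<^sub>F nhds x"
  have L1: "((\<lambda>p. mDplus (fst p) \<phi> (snd p)) \<longlongrightarrow> - f1 x) ?F"
  proof (rule lim_lemma[where g="\<lambda>z. - f1 z"])
    show "isCont (\<lambda>z. - f1 z) x" using c1 by simp
    fix h y :: real assume h: "h > 0"
    from dq[OF D0 h, of y] obtain z where z: "y < z" "z < y + h" "\<phi> (y+h) - \<phi> y = h * f1 z" by auto
    have "mDplus h \<phi> y = - f1 z" unfolding mDplus_def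
      using h z(3) by (simp add: field_simps)
    thus "\<exists>z. \<bar>z - y\<bar> \<le> h \<and> mDplus h \<phi> y = - f1 z" using z by (intro exI[of _ z]) auto
  qed
  have L2: "((\<lambda>p. Dminus (fst p) \<phi> (snd p)) \<longlongrightarrow> f1 x) ?F"
  proof (rule lim_lemma[where g="f1"])
    show "isCont f1 x" using c1 by simp
    fix h y :: real assume h: "h > 0"
    from dq[OF D0 h, of "y - h"] obtain z where z: "y - h < z" "z < y" "\<phi> y - \<phi> (y - h) = h * f1 z" by auto
    have "Dminus h \<phi> y = f1 z" unfolding Dminus_def
      using h z(3) by (simp add: field_simps)
    thus "\<exists>z. \<bar>z - y\<bar> \<le> h \<and> Dminus h \<phi> y = f1 z" using z by (intro exI[of _ z]) auto
  qed
  have L3: "((\<lambda>p. uxx (fst p) \<phi> (snd p)) \<longlongrightarrow> f2 x) ?F"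
  proof (rule lim_lemma[where g="f2"])
    show "isCont f2 x" using c2 by simp
    fix h y :: real assume h: "h > 0"
    have DD: "\<And>t. DERIV (\<lambda>t. \<phi> (t + h) - \<phi> t) t :> f1 (t + h) - f1 t"
    proof -
      fix t
      have s: "((\<lambda>z. \<phi> (z + h)) has_real_derivative f1 (t + h)) (at t)"
        using D0[of "t + h"] by (simp add: DERIV_shift)
      show "DERIV (\<lambda>t. \<phi> (t + h) - \<phi> t) t :> f1 (t + h) - f1 t"
        by (rule DERIV_diff[OF s D0])
    qed
    from dq[OF DD h, of "y - h"] obtain \<xi> where xi: "y - h < \<xi>" "\<xi> < y"
      "(\<phi> (y + h) - \<phi> y) - (\<phi> y - \<phi> (y - h)) = h * (f1 (\<xi> + h) - f1 \<xi>)" by auto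
    from dq[OF D1 h, of \<xi>] obtain z where z: "\<xi> < z" "z < \<xi> + h" "f1 (\<xi> + h) - f1 \<xi> = h * f2 z" by auto
    have "\<phi> (y + h) - 2 * \<phi> y + \<phi> (y - h) = h\<^sup>2 * f2 z"
      using xi(3) z(3) by (simp add: power2_eq_square algebra_simps)
    hence "uxx h \<phi> y = f2 z" unfolding uxx_def using h by simp
    thus "\<exists>z. \<bar>z - y\<bar> \<le> h \<and> uxx h \<phi> y = f2 z" using z xi by (intro exI[of _ z]) auto
  qed
  let ?p = "f1 x" and ?q = "f2 x"
  have L: "((\<lambda>z. mF1De (fst z) \<phi> (snd z)) \<longlongrightarrow>
     root 3 ((max (max (max (- ?p) ?p) 0) 0)\<^sup>2 * max (- ?q) 0) + root 3 ((min (min (min (- ?p) ?p) 0) 0)\<^sup>2 * min (- ?q) 0)) ?F"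
  proof -
    have M1: "((\<lambda>z. max (max (mDplus (fst z) \<phi> (snd z)) (Dminus (fst z) \<phi> (snd z))) 0) \<longlongrightarrow> max (max (- ?p) ?p) 0) ?F"
      by (rule tendsto_max[OF tendsto_max[OF L1 L2] tendsto_const])
    have M2: "((\<lambda>z. min (min (mDplus (fst z) \<phi> (snd z)) (Dminus (fst z) \<phi> (snd z))) 0) \<longlongrightarrow> min (min (- ?p) ?p) 0) ?F"
      by (rule tendsto_min[OF tendsto_min[OF L1 L2] tendsto_const])
    have N: "((\<lambda>z. - uxx (fst z) \<phi> (snd z)) \<longlongrightarrow> - ?q) ?F" by (rule tendsto_minus[OF L3])
    have E: "(\<lambda>z. mF1De (fst z) \<phi> (snd z)) = (\<lambda>z. root 3 ((max (max (max (mDplus (fst z) \<phi> (snd z)) (Dminus (fst z) \<phi> (snd z))) 0) 0)\<^sup>2 * max (- uxx (fst z) \<phi> (snd z)) 0) + root 3 ((min (min (min (mDplus (fst z) \<phi> (snd z)) (Dminus (fst z) \<phi> (snd z))) 0) 0)\<^sup>2 * min (- uxx (fst z) \<phi> (snd z)) 0))"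
      unfolding mF1De_def Aplus_def Aminus_def A_def pos_part_def neg_part_def absux_plus_def mabsux_minus_def ..
    show ?thesis
      unfolding E
      by (rule tendsto_add[OF tendsto_real_root[OF tendsto_mult[OF tendsto_power[OF tendsto_max[OF M1 tendsto_const]] tendsto_max[OF N tendsto_const]]]
                              tendsto_real_root[OF tendsto_mult[OF tendsto_power[OF tendsto_min[OF M2 tendsto_const]] tendsto_min[OF N tendsto_const]]]])
  qed
  have v: "root 3 ((max (max (max (- ?p) ?p) 0) 0)\<^sup>2 * max (- ?q) 0) + root 3 ((min (min (min (- ?p) ?p) 0) 0)\<^sup>2 * min (- ?q) 0)
     = - F1D \<phi> x"
  proof -
    have a: "(max (max (- ?p) ?p) 0)\<^sup>2 = ?p\<^sup>2" "(min (min (- ?p) ?p) 0)\<^sup>2 = ?p\<^sup>2"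
      by (auto simp: max_def min_def)
    have F: "F1D \<phi> x = root 3 (?p\<^sup>2 * ?q)" by (simp add: F1D_def A_def f1_def f2_def)
    have m: "root 3 (?p\<^sup>2 * - ?q) = - root 3 (?p\<^sup>2 * ?q)"
      using real_root_minus[of 3 "?p\<^sup>2 * ?q"] by simp
    have a2: "(min (- ?p) ?p)\<^sup>2 = ?p\<^sup>2" "(max (- ?p) ?p)\<^sup>2 = ?p\<^sup>2"
      by (auto simp: max_def min_def)
    show ?thesis
    proof (cases "?q \<ge> 0")
      case True
      hence "max (- ?q) 0 = 0" "min (- ?q) 0 = - ?q" by auto
      thus ?thesis using m a a2 F by simp
    next
      case False
      hence "max (- ?q) 0 = - ?q" "min (- ?q) 0 = 0" by auto
      thus ?thesis using m a a2 F by simp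
    qed
  qed
  show "((\<lambda>(h, y). mF1De h \<phi> y) \<longlongrightarrow> - F1D \<phi> x) ?F"
    using L unfolding v case_prod_unfold .
qed

theorem mainTheorem5:
  shows "elliptic_scheme mF1De \<and> consistent_with mF1De (\<lambda>u x. - F1D u x)"
  using elliptic consistent by blast

end
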